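(* Let $\Gamma$ be a group that is nilpotent of class $\le n$, let $G:=\mathrm{Cay}(\Gamma,S)$ be a Cayley graph for a generating set $S$ containing two inequivalent elements, and let $r\ge 2^{n+1}$. Suppose that for all $g,h\in S$ with $g\not\equiv h$ there exists a morpheme of $\Gamma$ in $S$ of length at most $r$ that is magic in $g$ and $h$. Then $G$ has no $r$-local cutvertex.
   Context: A generating set excludes the neutral element $\mathbb{I}$ and is closed under inverses; $\mathrm{Cay}(\Gamma,S)$ is the simple graph on $\Gamma$ with edges $\{g,gs\}$. $a\equiv b$ means $a=b$ or $a=b^{-1}$. $\Gamma$ is nilpotent of class $\le n$ if $[g,h]_n=\mathbb{I}$ for all $g\not\equiv h$, where $[g,h]_1=gh^{-1}g^{-1}h$ and $[g,h]_n$ is the reduced form of $g[g,h]_{n-1}^{-1}g^{-1}[g,h]_{n-1}$. A morpheme of $\Gamma$ in $S$ is a nonempty word in $S$ evaluating to $\mathbb{I}$ none of whose nonempty proper contiguous subwords evaluates to $\mathbb{I}$. A word $u$ is magic in $g,h$ if $u$ and $u^{-1}$ together contain at least three of $gh,hg,g^{-1}h,hg^{-1}$ as contiguous subwords. The ball $B_r(v)$ is the subgraph of all vertices and edges on closed walks of length $\le r$ through $v$; $v$ is an $r$-local cutvertex if $B_r(v)-v$ is disconnected. *)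

theory Defs
  imports "HOL-Algebra.Algebra" "HOL-Library.Sublist"
begin

definition gequiv :: "('a, 'b) monoid_scheme \<Rightarrow> 'a \<Rightarrow> 'a \<Rightarrow> bool" where
  "gequiv G a b \<longleftrightarrow> a = b \<or> a = inv\<^bsub>G\<^esub> b"

definition generating_set :: "('a, 'b) monoid_scheme \<Rightarrow> 'a set \<Rightarrow> bool" where
  "generating_set G S \<longleftrightarrow> S \<subseteq> carrier G \<and> \<one>\<^bsub>G\<^esub> \<notin> S
     \<and> (\<forall>s\<in>S. inv\<^bsub>G\<^esub> s \<in> S) \<and> generate G S = carrier G"

(* iterated commutators: [g,h]_1 = g h^-1 g^-1 h,
   [g,h]_(k+1) = g [g,h]_k^-1 g^-1 [g,h]_k ; index 0 is unused (set to 1) *)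
fun itcomm :: "('a, 'b) monoid_scheme \<Rightarrow> 'a \<Rightarrow> 'a \<Rightarrow> nat \<Rightarrow> 'a" where
  "itcomm G g h 0 = \<one>\<^bsub>G\<^esub>"
| "itcomm G g h (Suc 0) = g \<otimes>\<^bsub>G\<^esub> inv\<^bsub>G\<^esub> h \<otimes>\<^bsub>G\<^esub> inv\<^bsub>G\<^esub> g \<otimes>\<^bsub>G\<^esub> h"
| "itcomm G g h (Suc (Suc k)) =
     g \<otimes>\<^bsub>G\<^esub> inv\<^bsub>G\<^esub> (itcomm G g h (Suc k)) \<otimes>\<^bsub>G\<^esub> inv\<^bsub>G\<^esub> g
       \<otimes>\<^bsub>G\<^esub> itcomm G g h (Suc k)"

(* nilpotent of class \<le> n (paper's definition; n \<ge> 1) *)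
definition nilpotent_le :: "('a, 'b) monoid_scheme \<Rightarrow> nat \<Rightarrow> bool" where
  "nilpotent_le G n \<longleftrightarrow> (\<forall>g\<in>carrier G. \<forall>h\<in>carrier G.
      \<not> gequiv G g h \<longrightarrow> itcomm G g h n = \<one>\<^bsub>G\<^esub>)"

definition word_eval :: "('a, 'b) monoid_scheme \<Rightarrow> 'a list \<Rightarrow> 'a" where
  "word_eval G w = foldr (\<lambda>x a. x \<otimes>\<^bsub>G\<^esub> a) w \<one>\<^bsub>G\<^esub>"

definition word_inv :: "('a, 'b) monoid_scheme \<Rightarrow> 'a list \<Rightarrow> 'a list" where
  "word_inv G w = rev (map (\<lambda>x. inv\<^bsub>G\<^esub> x) w)"

definition morpheme :: "('a, 'b) monoid_scheme \<Rightarrow> 'a set \<Rightarrow> 'a list \<Rightarrow> bool" where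
  "morpheme G S w \<longleftrightarrow> w \<noteq> [] \<and> set w \<subseteq> S \<and> word_eval G w = \<one>\<^bsub>G\<^esub>
     \<and> (\<forall>i j. i < j \<and> j \<le> length w \<and> (i, j) \<noteq> (0, length w)
            \<longrightarrow> word_eval G (take (j - i) (drop i w)) \<noteq> \<one>\<^bsub>G\<^esub>)"

definition magic_patterns :: "('a, 'b) monoid_scheme \<Rightarrow> 'a \<Rightarrow> 'a \<Rightarrow> nat \<Rightarrow> 'a list" where
  "magic_patterns G g h i = [[g, h], [h, g], [inv\<^bsub>G\<^esub> g, h], [h, inv\<^bsub>G\<^esub> g]] ! i"

definition magic :: "('a, 'b) monoid_scheme \<Rightarrow> 'a list \<Rightarrow> 'a \<Rightarrow> 'a \<Rightarrow> bool" where
  "magic G u g h \<longleftrightarrow> 3 \<le> card {i. i < 4 \<and>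
      (sublist (magic_patterns G g h i) u \<or> sublist (magic_patterns G g h i) (word_inv G u))}"

definition cay_adj :: "('a, 'b) monoid_scheme \<Rightarrow> 'a set \<Rightarrow> 'a \<Rightarrow> 'a \<Rightarrow> bool" where
  "cay_adj G S x y \<longleftrightarrow> x \<in> carrier G \<and> y \<in> carrier G \<and>
     (\<exists>s\<in>S. y = x \<otimes>\<^bsub>G\<^esub> s \<or> x = y \<otimes>\<^bsub>G\<^esub> s)"

(* closed walk through v as a vertex list p_0 ... p_k with p_0 = p_k = v; length k = length p - 1 *)
definition closed_walk :: "('v \<Rightarrow> 'v \<Rightarrow> bool) \<Rightarrow> 'v \<Rightarrow> 'v list \<Rightarrow> bool" where
  "closed_walk E v p \<longleftrightarrow> p \<noteq> [] \<and> hd p = v \<and> last p = v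
     \<and> (\<forall>i. Suc i < length p \<longrightarrow> E (p ! i) (p ! Suc i))"

definition ball_verts :: "('v \<Rightarrow> 'v \<Rightarrow> bool) \<Rightarrow> nat \<Rightarrow> 'v \<Rightarrow> 'v set" where
  "ball_verts E r v = {x. \<exists>p. closed_walk E v p \<and> length p \<le> Suc r \<and> x \<in> set p}"

definition ball_edges :: "('v \<Rightarrow> 'v \<Rightarrow> bool) \<Rightarrow> nat \<Rightarrow> 'v \<Rightarrow> ('v \<times> 'v) set" where
  "ball_edges E r v = {(x, y). \<exists>p i. closed_walk E v p \<and> length p \<le> Suc r
      \<and> Suc i < length p \<and> {x, y} = {p ! i, p ! Suc i}}"

definition local_cutvertex :: "('v \<Rightarrow> 'v \<Rightarrow> bool) \<Rightarrow> nat \<Rightarrow> 'v \<Rightarrow> bool" where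
  "local_cutvertex E r v \<longleftrightarrow>
     (let V = ball_verts E r v - {v};
          F = {(x, y) \<in> ball_edges E r v. x \<noteq> v \<and> y \<noteq> v}
      in \<exists>x\<in>V. \<exists>y\<in>V. (x, y) \<notin> F\<^sup>*)"

end

theory Submission
  imports Defs
begin

definition cutF :: "('v \<Rightarrow> 'v \<Rightarrow> bool) \<Rightarrow> nat \<Rightarrow> 'v \<Rightarrow> ('v \<times> 'v) set" where
  "cutF E r v = {(x, y) \<in> ball_edges E r v. x \<noteq> v \<and> y \<noteq> v}"

lemma cutF_sym: "(x, y) \<in> (cutF E r v)\<^sup>* \<Longrightarrow> (y, x) \<in> (cutF E r v)\<^sup>*"
proof (induction rule: rtrancl_induct)
  case base then show ?case by simp
next
  case (step y z)
  have "(z, y) \<in> cutF E r v" using step(2) unfolding cutF_def ball_edges_def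
    by auto
  then show ?case using step(3) by (meson converse_rtrancl_into_rtrancl)
qed

lemma card3: assumes "3 \<le> card {i::nat. i < 4 \<and> Q i}"
  shows "(Q 0 \<and> Q 1 \<and> Q 2) \<or> (Q 0 \<and> Q 1 \<and> Q 3) \<or> (Q 0 \<and> Q 2 \<and> Q 3) \<or> (Q 1 \<and> Q 2 \<and> Q 3)"
proof -
  have two: False if "\<not> Q a" "\<not> Q b" "a \<noteq> b" "a < 4" "b < 4" for a b
  proof -
    have "{i::nat. i < 4 \<and> Q i} \<subseteq> {0..<4} - {a, b}" using that by auto
    hence "card {i::nat. i < 4 \<and> Q i} \<le> card ({0..<4} - {a, b})" by (intro card_mono) auto
    also have "\<dots> = 2" using that by (simp add: card_Diff_subset)
    finally show False using assms by simp
  qed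
  show ?thesis using two[of 0 1] two[of 0 2] two[of 0 3] two[of 1 2] two[of 1 3] two[of 2 3]
    by auto
qed

context group
begin

lemma we_Nil [simp]: "word_eval G [] = \<one>"
  by (simp add: word_eval_def)

lemma we_Cons [simp]: "word_eval G (x # xs) = x \<otimes> word_eval G xs"
  by (simp add: word_eval_def)

lemma we_closed: "set xs \<subseteq> carrier G \<Longrightarrow> word_eval G xs \<in> carrier G"
  by (induction xs) auto

lemma we_append: "set xs \<subseteq> carrier G \<Longrightarrow> set ys \<subseteq> carrier G \<Longrightarrow>
   word_eval G (xs @ ys) = word_eval G xs \<otimes> word_eval G ys"
  by (induction xs) (auto simp: m_assoc we_closed)

lemma we_take_Suc: "set w \<subseteq> carrier G \<Longrightarrow> k < length w \<Longrightarrow>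
   word_eval G (take (Suc k) w) = word_eval G (take k w) \<otimes> w ! k"
proof -
  assume a: "set w \<subseteq> carrier G" "k < length w"
  have "w ! k \<in> carrier G" using a nth_mem[of k w] by auto
  moreover have "set (take k w) \<subseteq> carrier G" using a set_take_subset[of k w] by auto
  ultimately show ?thesis using a
    by (simp add: take_Suc_conv_app_nth we_append)
qed

lemma rotation:
  assumes m: "morpheme G S u" and S: "S \<subseteq> carrier G" and u: "u = Xw @ Yw"
    and Xw: "Xw \<noteq> []" and Yw: "Yw \<noteq> []"
  shows "word_eval G (Yw @ Xw) = \<one>"
    and "\<And>k. 0 < k \<Longrightarrow> k < length u \<Longrightarrow> word_eval G (take k (Yw @ Xw)) \<noteq> \<one>"
proof -
  have uc: "set u \<subseteq> carrier G" using m S unfolding morpheme_def by auto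
  hence Xwc: "set Xw \<subseteq> carrier G" and Ywc: "set Yw \<subseteq> carrier G" using u by auto
  have e: "word_eval G Xw \<otimes> word_eval G Yw = \<one>"
    using m u we_append[OF Xwc Ywc] unfolding morpheme_def by simp
  show "word_eval G (Yw @ Xw) = \<one>"
    using inv_comm[OF e we_closed[OF Xwc] we_closed[OF Ywc]] we_append[OF Ywc Xwc] by simp
  have nz: "\<And>i j. i < j \<Longrightarrow> j \<le> length u \<Longrightarrow> (i, j) \<noteq> (0, length u) \<Longrightarrow>
      word_eval G (take (j - i) (drop i u)) \<noteq> \<one>" using m unfolding morpheme_def by blast
  fix k assume k0: "0 < k" and kl: "k < length u"
  show "word_eval G (take k (Yw @ Xw)) \<noteq> \<one>"
  proof (cases "k \<le> length Yw")
    case True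
    have "take k (Yw @ Xw) = take ((length Xw + k) - length Xw) (drop (length Xw) u)"
      using True u by simp
    moreover have "word_eval G (take ((length Xw + k) - length Xw) (drop (length Xw) u)) \<noteq> \<one>"
      apply (rule nz) using Xw True u k0 by auto
    ultimately show ?thesis by simp
  next
    case False
    define mm where "mm = k - length Yw"
    have mm0: "0 < mm" and mmX: "mm < length Xw" using False kl u mm_def by auto
    define T where "T = take mm Xw"
    define D where "D = drop mm Xw"
    have Tc: "set T \<subseteq> carrier G" using Xwc set_take_subset T_def by fastforce
    have Dc: "set D \<subseteq> carrier G" using Xwc set_drop_subset D_def by fastforce
    have tk: "take k (Yw @ Xw) = Yw @ T" using False mm_def T_def by simp
    have XTD: "Xw = T @ D" using T_def D_def by simp
    have Dne: "word_eval G D \<noteq> \<one>"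
    proof -
      have "D = take (length Xw - mm) (drop mm u)" using u D_def by simp
      then show ?thesis using nz[of mm "length Xw"] mm0 mmX u by auto
    qed
    show ?thesis
    proof
      assume "word_eval G (take k (Yw @ Xw)) = \<one>"
      hence "word_eval G Yw \<otimes> word_eval G T = \<one>" using tk we_append[OF Ywc Tc] by simp
      hence 1: "word_eval G T \<otimes> word_eval G Yw = \<one>"
        using inv_comm we_closed[OF Tc] we_closed[OF Ywc] by blast
      have "word_eval G T \<otimes> (word_eval G D \<otimes> word_eval G Yw) = \<one>"
        using e XTD we_append[OF Tc Dc] we_closed[OF Tc] we_closed[OF Dc] we_closed[OF Ywc]
        by (simp add: m_assoc)
      hence "word_eval G D \<otimes> word_eval G Yw = word_eval G Yw"
        using 1 we_closed[OF Tc] we_closed[OF Dc] we_closed[OF Ywc]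
        by (metis Units_eq Units_l_cancel m_closed)
      thus False using Dne we_closed[OF Dc] we_closed[OF Ywc] by simp
    qed
  qed
qed

lemma pattern:
  assumes S: "S \<subseteq> carrier G" and m: "morpheme G S u" and len: "length u \<le> r"
    and sub: "sublist [a, b] u" and v: "v \<in> carrier G"
  shows "(v \<otimes> b, v \<otimes> inv a) \<in> (cutF (cay_adj G S) r v)\<^sup>*"
proof -
  obtain A B where u: "u = A @ [a, b] @ B" using sub unfolding sublist_def by blast
  define w where "w = (b # B) @ (A @ [a])"
  define L where "L = length u"
  have lw: "length w = L" using u w_def L_def by simp
  have L2: "2 \<le> L" using u L_def by simp
  have rot1: "word_eval G w = \<one>" using rotation(1)[OF m S, of "A @ [a]" "b # B"] u w_def by simp
  have rot2: "\<And>k. 0 < k \<Longrightarrow> k < L \<Longrightarrow> word_eval G (take k w) \<noteq> \<one>"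
    using rotation(2)[OF m S, of "A @ [a]" "b # B"] u w_def L_def by simp
  have ws: "set w \<subseteq> S" using m u w_def unfolding morpheme_def by auto
  hence wc: "set w \<subseteq> carrier G" using S by auto
  have tc: "\<And>k. word_eval G (take k w) \<in> carrier G"
    using wc set_take_subset we_closed by (metis subset_trans)
  define p where "p = map (\<lambda>k. v \<otimes> word_eval G (take k w)) [0..<Suc L]"
  have lp: "length p = Suc L" using p_def by simp
  have pn: "\<And>k. k \<le> L \<Longrightarrow> p ! k = v \<otimes> word_eval G (take k w)"
    using p_def by (simp del: upt_Suc add: nth_map nth_upt less_Suc_eq_le)
  have pc: "\<And>k. k \<le> L \<Longrightarrow> p ! k \<in> carrier G" using pn tc v by simp
  have pne: "p \<noteq> []" using lp by auto
  have cw: "closed_walk (cay_adj G S) v p"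
    unfolding closed_walk_def
  proof (intro conjI allI impI)
    show "p \<noteq> []" using lp by auto
    show "hd p = v" using hd_conv_nth[OF pne] lp pn[of 0] v by auto
    show "last p = v" using last_conv_nth[OF pne] lp pn[of L] v rot1 lw by auto
    fix i assume i: "Suc i < length p"
    hence iL: "i < L" using lp by simp
    have wic: "w ! i \<in> carrier G" using wc nth_mem[of i w] iL lw by auto
    have "p ! Suc i = p ! i \<otimes> w ! i"
      using wic pn[of i] pn[of "Suc i"] iL we_take_Suc[OF wc, of i] lw v tc nth_mem[of i w] wc
      by (auto simp: m_assoc)
    moreover have "w ! i \<in> S" using ws nth_mem[of i w] iL lw by auto
    ultimately show "cay_adj G S (p ! i) (p ! Suc i)"
      unfolding cay_adj_def using pc[of i] pc[of "Suc i"] iL by auto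
  qed
  have lpr: "length p \<le> Suc r" using lp len L_def by simp
  have ne: "\<And>k. 0 < k \<Longrightarrow> k < L \<Longrightarrow> p ! k \<noteq> v"
    using pn rot2 tc v by (metis less_imp_le_nat l_cancel_one)
  have edge: "\<And>i. 1 \<le> i \<Longrightarrow> Suc i < L \<Longrightarrow> (p ! i, p ! Suc i) \<in> cutF (cay_adj G S) r v"
  proof -
    fix i assume i: "1 \<le> i" "Suc i < L"
    have "(p ! i, p ! Suc i) \<in> ball_edges (cay_adj G S) r v"
      unfolding ball_edges_def using cw lpr i lp
      by (intro CollectI case_prodI exI[of _ p] exI[of _ i]) auto
    then show "(p ! i, p ! Suc i) \<in> cutF (cay_adj G S) r v"
      unfolding cutF_def using ne[of i] ne[of "Suc i"] i by auto
  qed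
  have chain: "\<And>k. 1 \<le> k \<Longrightarrow> k < L \<Longrightarrow> (p ! 1, p ! k) \<in> (cutF (cay_adj G S) r v)\<^sup>*"
  proof -
    fix k show "1 \<le> k \<Longrightarrow> k < L \<Longrightarrow> (p ! 1, p ! k) \<in> (cutF (cay_adj G S) r v)\<^sup>*"
    proof (induction k)
      case 0 then show ?case by simp
    next
      case (Suc k)
      show ?case
      proof (cases "k = 0")
        case True then show ?thesis by simp
      next
        case False
        then have "(p ! 1, p ! k) \<in> (cutF (cay_adj G S) r v)\<^sup>*" using Suc by simp
        moreover have "(p ! k, p ! Suc k) \<in> cutF (cay_adj G S) r v"
          using edge[of k] False Suc.prems by simp
        ultimately show ?thesis by (rule rtrancl_into_rtrancl)
      qed
    qed
  qed
  have ac: "a \<in> carrier G" and bc: "b \<in> carrier G" using wc w_def by auto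
  have p1: "p ! 1 = v \<otimes> b" using pn[of 1] L2 w_def bc by simp
  have BAc: "set (b # B @ A) \<subseteq> carrier G" using wc w_def by auto
  have tl1: "take (L - 1) w = b # B @ A"
  proof -
    have "w = (b # B @ A) @ [a]" using w_def by simp
    moreover have "L - 1 = length (b # B @ A)" using w_def lw by simp
    ultimately show ?thesis by simp
  qed
  have "word_eval G (b # B @ A) \<otimes> a = \<one>"
    using rot1 w_def we_append[OF BAc, of "[a]"] ac by simp
  hence "inv a = word_eval G (b # B @ A)"
    using inv_equality ac we_closed[OF BAc] by blast
  hence pL: "p ! (L - 1) = v \<otimes> inv a" using pn[of "L - 1"] tl1 by simp
  show ?thesis using chain[of "L - 1"] L2 p1 pL by simp
qed

lemma pattern2:
  assumes S: "S \<subseteq> carrier G" and m: "morpheme G S u" and len: "length u \<le> r"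
    and sub: "sublist [a, b] u \<or> sublist [a, b] (word_inv G u)" and v: "v \<in> carrier G"
  shows "(v \<otimes> b, v \<otimes> inv a) \<in> (cutF (cay_adj G S) r v)\<^sup>*"
  using sub
proof
  assume "sublist [a, b] u" then show ?thesis using pattern[OF S m len _ v] by blast
next
  assume "sublist [a, b] (word_inv G u)"
  then obtain P Q where PQ: "rev (map (\<lambda>x. inv x) u) = P @ [a, b] @ Q"
    unfolding sublist_def word_inv_def by blast
  have uc: "set u \<subseteq> carrier G" using m S unfolding morpheme_def by auto
  have "map (\<lambda>x. inv x) u = rev Q @ [b, a] @ rev P" using arg_cong[OF PQ, of rev] by simp
  hence "map (\<lambda>x. inv x) (map (\<lambda>x. inv x) u) = map (\<lambda>x. inv x) (rev Q) @ [inv b, inv a] @ map (\<lambda>x. inv x) (rev P)" by simp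
  moreover have "map (\<lambda>x. inv x) (map (\<lambda>x. inv x) u) = u" using uc by (induction u) auto
  ultimately have "sublist [inv b, inv a] u" unfolding sublist_def by metis
  from pattern[OF S m len this v]
  have "(v \<otimes> inv a, v \<otimes> inv (inv b)) \<in> (cutF (cay_adj G S) r v)\<^sup>*" .
  moreover have "b \<in> carrier G"
  proof -
    have "b \<in> set (rev (map (\<lambda>x. inv x) u))" using PQ by simp
    thus ?thesis using uc by auto
  qed
  ultimately show ?thesis using cutF_sym by auto
qed

lemma reach:
  assumes S: "S \<subseteq> carrier G" and Sinv: "\<forall>s\<in>S. inv s \<in> S" and v: "v \<in> carrier G"
    and cw: "closed_walk (cay_adj G S) v p" and lpr: "length p \<le> Suc r"
  shows "k < length p \<Longrightarrow> p ! k \<noteq> v \<Longrightarrow> \<exists>s\<in>S. (p ! k, v \<otimes> s) \<in> (cutF (cay_adj G S) r v)\<^sup>*"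
proof (induction "length p - k" arbitrary: k rule: less_induct)
  case less
  have pne: "p \<noteq> []" using cw unfolding closed_walk_def by auto
  have "last p = v" using cw unfolding closed_walk_def by auto
  hence "k \<noteq> length p - 1" using less.prems last_conv_nth[OF pne] by auto
  hence sk: "Suc k < length p" using less.prems by auto
  have adj: "cay_adj G S (p ! k) (p ! Suc k)" using cw sk unfolding closed_walk_def by auto
  show ?case
  proof (cases "p ! Suc k = v")
    case True
    with adj obtain s where s: "s \<in> S" "v = p ! k \<otimes> s \<or> p ! k = v \<otimes> s"
      and pk: "p ! k \<in> carrier G" unfolding cay_adj_def by auto
    have sc: "s \<in> carrier G" using s S by auto
    from s(2) show ?thesis
    proof
      assume "v = p ! k \<otimes> s"
      hence "p ! k = v \<otimes> inv s" using pk sc by (simp add: m_assoc)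
      thus ?thesis using Sinv s by auto
    next
      assume "p ! k = v \<otimes> s" thus ?thesis using s by auto
    qed
  next
    case False
    have "length p - Suc k < length p - k" using sk by simp
    from less.hyps[OF this] sk False obtain s where
      s: "s \<in> S" "(p ! Suc k, v \<otimes> s) \<in> (cutF (cay_adj G S) r v)\<^sup>*" by auto
    have "(p ! k, p ! Suc k) \<in> ball_edges (cay_adj G S) r v"
      unfolding ball_edges_def using cw lpr sk
      by (intro CollectI case_prodI exI[of _ p] exI[of _ k]) auto
    hence "(p ! k, p ! Suc k) \<in> cutF (cay_adj G S) r v"
      unfolding cutF_def using False less.prems by auto
    thus ?thesis using s by (meson converse_rtrancl_into_rtrancl)
  qed
qed

lemma magic_conn:
  assumes S: "S \<subseteq> carrier G" and m: "morpheme G S u" and len: "length u \<le> r"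
    and mg: "magic G u g h" and v: "v \<in> carrier G" and g: "g \<in> S" and h: "h \<in> S"
  shows "(v \<otimes> g, v \<otimes> h) \<in> (cutF (cay_adj G S) r v)\<^sup>*
    \<and> (v \<otimes> g, v \<otimes> inv g) \<in> (cutF (cay_adj G S) r v)\<^sup>*"
proof -
  let ?R = "\<lambda>x y. (x, y) \<in> (cutF (cay_adj G S) r v)\<^sup>*"
  let ?Q = "\<lambda>i. sublist (magic_patterns G g h i) u \<or> sublist (magic_patterns G g h i) (word_inv G u)"
  have gc: "g \<in> carrier G" using g S by auto
  have q: "(?Q 0 \<and> ?Q 1 \<and> ?Q 2) \<or> (?Q 0 \<and> ?Q 1 \<and> ?Q 3) \<or> (?Q 0 \<and> ?Q 2 \<and> ?Q 3) \<or> (?Q 1 \<and> ?Q 2 \<and> ?Q 3)"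
    by (rule card3) (use mg in \<open>simp add: magic_def\<close>)
  have e0: "?Q 0 \<Longrightarrow> ?R (v \<otimes> h) (v \<otimes> inv g)"
    using pattern2[OF S m len _ v, of g h] by (simp add: magic_patterns_def)
  have e1: "?Q 1 \<Longrightarrow> ?R (v \<otimes> g) (v \<otimes> inv h)"
    using pattern2[OF S m len _ v, of h g] by (simp add: magic_patterns_def)
  have e2: "?Q 2 \<Longrightarrow> ?R (v \<otimes> h) (v \<otimes> g)"
    using pattern2[OF S m len _ v, of "inv g" h] gc by (simp add: magic_patterns_def)
  have e3: "?Q 3 \<Longrightarrow> ?R (v \<otimes> inv g) (v \<otimes> inv h)"
    using pattern2[OF S m len _ v, of h "inv g"] by (simp add: magic_patterns_def)
  have sy: "\<And>x y. ?R x y \<Longrightarrow> ?R y x" using cutF_sym by metis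
  have tr: "\<And>x y z. ?R x y \<Longrightarrow> ?R y z \<Longrightarrow> ?R x z" by (meson rtrancl_trans)
  from q show ?thesis
    using e0 e1 e2 e3 sy tr by metis
qed

end


lemma (in group) main_aux:
  assumes "generating_set G S"
    and "\<exists>g\<in>S. \<exists>h\<in>S. \<not> gequiv G g h"
    and "\<forall>g\<in>S. \<forall>h\<in>S. \<not> gequiv G g h \<longrightarrow>
           (\<exists>u. morpheme G S u \<and> length u \<le> r \<and> magic G u g h)"
  shows "\<forall>v\<in>carrier G. \<not> local_cutvertex (cay_adj G S) r v"
proof
  fix v assume v: "v \<in> carrier G"
  have S: "S \<subseteq> carrier G" and Sinv: "\<forall>s\<in>S. inv s \<in> S"
    using assms(1) unfolding generating_set_def by auto
  let ?R = "\<lambda>x y. (x, y) \<in> (cutF (cay_adj G S) r v)\<^sup>*"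
  have sy: "\<And>x y. ?R x y \<Longrightarrow> ?R y x" using cutF_sym by metis
  have tr: "\<And>x y z. ?R x y \<Longrightarrow> ?R y z \<Longrightarrow> ?R x z" by (meson rtrancl_trans)
  have conn: "?R (v \<otimes> g) (v \<otimes> h) \<and> ?R (v \<otimes> g) (v \<otimes> inv g)"
    if "g \<in> S" "h \<in> S" "\<not> gequiv G g h" for g h
    using assms(3) that magic_conn[OF S _ _ _ v] by blast
  have other: "\<exists>h\<in>S. \<not> gequiv G g h" if g: "g \<in> S" for g
  proof -
    obtain g0 h0 where gh: "g0 \<in> S" "h0 \<in> S" "\<not> gequiv G g0 h0" using assms(2) by blast
    show ?thesis
    proof (cases "gequiv G g g0")
      case False then show ?thesis using gh by blast
    next
      case True
      have c: "g \<in> carrier G" "g0 \<in> carrier G" "h0 \<in> carrier G" using g gh S by auto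
      have "\<not> gequiv G g h0"
      proof
        assume "gequiv G g h0"
        with True c gh(3) show False unfolding gequiv_def by auto
      qed
      then show ?thesis using gh by blast
    qed
  qed
  have allconn: "?R (v \<otimes> s1) (v \<otimes> s2)" if ss: "s1 \<in> S" "s2 \<in> S" for s1 s2
  proof (cases "gequiv G s1 s2")
    case False then show ?thesis using conn ss by blast
  next
    case True
    obtain h where "h \<in> S" "\<not> gequiv G s1 h" using other ss(1) by blast
    hence "?R (v \<otimes> s1) (v \<otimes> inv s1)" using conn ss by blast
    moreover have "s1 \<in> carrier G" "s2 \<in> carrier G" using ss S by auto
    ultimately show ?thesis using True unfolding gequiv_def by (auto intro: sy)
  qed
  show "\<not> local_cutvertex (cay_adj G S) r v"
    unfolding local_cutvertex_def Let_def
  proof (simp only: cutF_def[symmetric], intro notI, elim bexE)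
    fix x y
    assume x: "x \<in> ball_verts (cay_adj G S) r v - {v}" and y: "y \<in> ball_verts (cay_adj G S) r v - {v}"
      and nc: "(x, y) \<notin> (cutF (cay_adj G S) r v)\<^sup>*"
    have nb: "\<exists>s\<in>S. ?R z (v \<otimes> s)" if z: "z \<in> ball_verts (cay_adj G S) r v - {v}" for z
    proof -
      obtain p where p: "closed_walk (cay_adj G S) v p" "length p \<le> Suc r" "z \<in> set p" "z \<noteq> v"
        using z unfolding ball_verts_def by auto
      then obtain k where "k < length p" "p ! k = z" by (meson in_set_conv_nth)
      then show ?thesis using reach[OF S Sinv v p(1) p(2)] p(4) by blast
    qed
    obtain s1 where s1: "s1 \<in> S" "?R x (v \<otimes> s1)" using nb x by blast
    obtain s2 where s2: "s2 \<in> S" "?R y (v \<otimes> s2)" using nb y by blast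
    have "?R x y" using s1 s2 allconn[OF s1(1) s2(1)] sy tr by metis
    with nc show False by simp
  qed
qed



theorem lemma4p2:
  fixes G :: "('a, 'b) monoid_scheme" and S :: "'a set" and n r :: nat
  assumes "group G"
    and "1 \<le> n"
    and "nilpotent_le G n"
    and "generating_set G S"
    and "\<exists>g\<in>S. \<exists>h\<in>S. \<not> gequiv G g h"
    and "2 ^ (n + 1) \<le> r"
    and "\<forall>g\<in>S. \<forall>h\<in>S. \<not> gequiv G g h \<longrightarrow>
           (\<exists>u. morpheme G S u \<and> length u \<le> r \<and> magic G u g h)"
  shows "\<forall>v\<in>carrier G. \<not> local_cutvertex (cay_adj G S) r v"
  using group.main_aux[OF assms(1) assms(4) assms(5) assms(7)] .

end
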